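(* Let $\mathcal{S}\subset\mathbb{T}$ be a measurable set of positive Lebesgue measure. Then there exists a constant $\gamma=\gamma(\mathcal{S})>0$ such that for every $\alpha>1$ there exists $N(\alpha)\in\mathbb{N}$ with the following property: for every integer $N\ge N(\alpha)$ there is $\ell\in\mathbb{N}$ with $\ell<N^{\alpha}$ such that $\gamma$ is a lower Riesz bound in $L^2(\mathcal{S})$ for $E(\{\ell,2\ell,\ldots,N\ell\})$.
   Context: $\mathbb{T}=\mathbb{R}/2\pi\mathbb{Z}$. For $B\subset\mathbb{Z}$, $E(B):=\{e^{i\lambda t}\}_{\lambda\in B}$. A positive number $\gamma$ is a lower Riesz bound in $L^2(\mathcal{S})$ for $E(B)$ if $\int_{\mathcal{S}}\big|\sum_{\lambda\in B}c(\lambda)e^{i\lambda t}\big|^2\frac{dt}{2\pi}\ge\gamma\sum_{\lambda\in B}|c(\lambda)|^2$ for every finite sequence of scalars $\{c(\lambda)\}_{\lambda\in B}$. *)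

theory Defs
  imports "HOL-Analysis.Analysis"
begin

text \<open>The torus T = R/2piZ is identified with the fundamental domain [0,2pi),
  with normalized Lebesgue measure dt/(2 pi).\<close>

definition lower_riesz_bound :: "real set \<Rightarrow> int set \<Rightarrow> real \<Rightarrow> bool" where
  "lower_riesz_bound S B \<gamma> \<longleftrightarrow> \<gamma> > 0 \<and>
     (\<forall>c :: int \<Rightarrow> complex.
        (LINT t:S|lebesgue. (cmod (\<Sum>m\<in>B. c m * exp (\<i> * of_int m * of_real t)))\<^sup>2 / (2 * pi))
          \<ge> \<gamma> * (\<Sum>m\<in>B. (cmod (c m))\<^sup>2))"

end

theory Submission
  imports Defs "HOL-Computational_Algebra.Primes"
begin


definition dcount :: "nat \<Rightarrow> nat" where "dcount n = card {k. k dvd n}"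

lemma dcount_step:
  assumes p: "prime p" and n: "n = p ^ a * b" and b: "b > 0" and nd: "\<not> p dvd b"
  shows "dcount n \<le> (a + 1) * dcount b"
proof -
  have n0: "n \<noteq> 0" using n b p by (simp add: prime_gt_0_nat)
  have sub: "{k. k dvd n} \<subseteq> (\<lambda>(i,e). p ^ i * e) ` ({0..a} \<times> {e. e dvd b})"
  proof
    fix k assume "k \<in> {k. k dvd n}"
    hence kd: "k dvd n" by simp
    define i where "i = multiplicity p k"
    define e where "e = k div p ^ i"
    have k: "k = p ^ i * e" unfolding e_def i_def using multiplicity_dvd[of p k] by simp
    have k0: "k \<noteq> 0" using kd n0 by auto
    have ne: "\<not> p dvd e" unfolding e_def i_def
      by (rule multiplicity_decompose) (use k0 p not_prime_unit in blast)+
    have "multiplicity p n = a"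
      using n nd p by (intro multiplicity_decomposeI) (auto simp: prime_gt_0_nat)
    hence ia: "i \<le> a" unfolding i_def using dvd_imp_multiplicity_le[OF kd n0, of p] by simp
    have "coprime e p" using ne p by (metis coprime_commute prime_imp_coprime)
    hence cp: "coprime e (p ^ a)" by simp
    have "e dvd p ^ a * b" using kd n k by (metis dvd_mult_right)
    hence "e dvd b" using cp by (simp add: coprime_dvd_mult_right_iff)
    thus "k \<in> (\<lambda>(i,e). p ^ i * e) ` ({0..a} \<times> {e. e dvd b})" using k ia by force
  qed
  have fin: "finite ({0..a} \<times> {e. e dvd b})" using b by simp
  have "dcount n \<le> card ((\<lambda>(i,e). p ^ i * e) ` ({0..a} \<times> {e. e dvd b}))"
    unfolding dcount_def by (rule card_mono[OF finite_imageI[OF fin] sub])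
  also have "\<dots> \<le> card ({0..a} \<times> {e. e dvd b})" by (rule card_image_le[OF fin])
  also have "\<dots> = (a+1) * dcount b" by (simp add: card_cartesian_product dcount_def)
  finally show ?thesis .
qed

lemma exp_lin_bound:
  assumes e: "\<epsilon> > 0" and p: "(p::real) \<ge> 2"
  shows "real a + 1 \<le> max 1 (1 / (\<epsilon> * ln 2)) * p powr (real a * \<epsilon>)"
proof -
  let ?K = "max 1 (1 / (\<epsilon> * ln 2))"
  have "p powr (real a * \<epsilon>) \<ge> 2 powr (real a * \<epsilon>)"
    using p e by (intro powr_mono2) auto
  moreover have "2 powr (real a * \<epsilon>) = exp (real a * \<epsilon> * ln 2)" by (simp add: powr_def)
  moreover have "exp (real a * \<epsilon> * ln 2) \<ge> 1 + real a * \<epsilon> * ln 2" by (rule exp_ge_add_one_self)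
  moreover have "real a + 1 \<le> ?K * (1 + real a * \<epsilon> * ln 2)"
  proof -
    have "real a = (1 / (\<epsilon> * ln 2)) * (real a * \<epsilon> * ln 2)" using e by simp
    also have "\<dots> \<le> ?K * (real a * \<epsilon> * ln 2)" using e by (intro mult_right_mono) auto
    finally have "real a \<le> ?K * (real a * \<epsilon> * ln 2)" .
    moreover have "1 \<le> ?K" by simp
    ultimately show ?thesis by (simp add: algebra_simps)
  qed
  moreover have "?K \<ge> 0" by simp
  ultimately show ?thesis by (smt (verit, best) mult_left_mono)
qed

lemma dcount_bound_aux:
  assumes e: "\<epsilon> > 0"
  shows "n > 0 \<Longrightarrow> real (dcount n) \<le> max 1 (1 / (\<epsilon> * ln 2)) ^ card {q. prime q \<and> q dvd n \<and> q < nat \<lceil>2 powr (1/\<epsilon>)\<rceil>} * real n powr \<epsilon>"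
proof (induction n rule: less_induct)
  case (less n)
  define K where "K = max 1 (1 / (\<epsilon> * ln 2))"
  define P where "P = nat \<lceil>2 powr (1/\<epsilon>)\<rceil>"
  define X where "X = (\<lambda>n. {q. prime q \<and> q dvd n \<and> q < P})"
  have K1: "K \<ge> 1" unfolding K_def by simp
  have finX: "finite (X m)" for m unfolding X_def by (rule finite_subset[of _ "{..<P}"]) auto
  show ?case
  proof (cases "n = 1")
    case True
    have "{k. k dvd (1::nat)} = {1}" by auto
    thus ?thesis using True by (simp add: dcount_def)
  next
    case False
    then obtain p where p: "prime p" "p dvd n" using prime_factor_nat by blast
    define a where "a = multiplicity p n"
    have n0: "n \<noteq> 0" using less.prems by simp
    have pu: "\<not> is_unit p" using p(1) not_prime_unit by blast
    obtain b where nb: "n = p ^ a * b" and nd: "\<not> p dvd b"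
      using multiplicity_decompose'[OF n0 pu] unfolding a_def by blast
    have a1: "a \<ge> 1" unfolding a_def using p
      using multiplicity_gt_zero_iff[OF n0 pu] by simp
    have b0: "b > 0" using nb less.prems by (auto intro: Nat.gr0I)
    have p2: "p \<ge> 2" using p by (simp add: prime_ge_2_nat)
    have "p ^ a \<ge> p ^ 1" using p2 a1 by (intro power_increasing) auto
    hence "p ^ a \<ge> 2" using p2 by simp
    hence "1 * b < p ^ a * b" using b0 by (intro mult_strict_right_mono) auto
    hence bn: "b < n" using nb by simp
    have IH: "real (dcount b) \<le> K ^ card (X b) * real b powr \<epsilon>"
      using less.IH[OF bn b0] unfolding K_def X_def P_def by simp
    have step: "real (dcount n) \<le> (real a + 1) * real (dcount b)"
    proof -
      have "real (dcount n) \<le> real ((a + 1) * dcount b)"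
        using dcount_step[OF p(1) nb b0 nd] by (rule of_nat_mono)
      thus ?thesis by (simp add: algebra_simps)
    qed
    have Xn: "X n = (if p < P then insert p (X b) else X b)"
    proof -
      have "q dvd n \<longleftrightarrow> q = p \<or> q dvd b" if "prime q" for q
        using that p a1 nb by (auto simp: prime_dvd_mult_iff prime_dvd_power_iff primes_dvd_imp_eq)
      thus ?thesis unfolding X_def using p by auto
    qed
    have pX: "p \<notin> X b" unfolding X_def using nd by auto
    have npow: "real n powr \<epsilon> = real p powr (real a * \<epsilon>) * real b powr \<epsilon>"
    proof -
      have "real n = real p ^ a * real b" using nb by simp
      hence "real n powr \<epsilon> = (real p ^ a) powr \<epsilon> * real b powr \<epsilon>" by (simp add: powr_mult)
      also have "(real p ^ a) powr \<epsilon> = real p powr (real a * \<epsilon>)"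
        using p2 by (simp add: powr_realpow[symmetric] powr_powr)
      finally show ?thesis .
    qed
    have pp0: "real p powr (real a * \<epsilon>) \<ge> 0" by simp
    show ?thesis
    proof (cases "p < P")
      case True
      have "real a + 1 \<le> K * real p powr (real a * \<epsilon>)"
        unfolding K_def using exp_lin_bound[OF e, of "real p" a] p2 by simp
      hence "(real a + 1) * real (dcount b) \<le> (K * real p powr (real a * \<epsilon>)) * (K ^ card (X b) * real b powr \<epsilon>)"
        using IH K1 by (intro mult_mono) auto
      hence "real (dcount n) \<le> (K * real p powr (real a * \<epsilon>)) * (K ^ card (X b) * real b powr \<epsilon>)"
        using step by linarith
      also have "\<dots> = K ^ card (X n) * real n powr \<epsilon>"
        using True Xn pX finX npow by simp
      finally show ?thesis unfolding K_def X_def P_def by simp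
    next
      case False
      have "2 powr (1/\<epsilon>) \<le> real p" using False unfolding P_def by linarith
      hence "(2 powr (1/\<epsilon>)) powr \<epsilon> \<le> real p powr \<epsilon>" using e by (intro powr_mono2) auto
      hence ge2: "real p powr \<epsilon> \<ge> 2" using e by (simp add: powr_powr)
      have "real a + 1 \<le> 2 ^ a" by (induction a) auto
      also have "\<dots> \<le> (real p powr \<epsilon>) ^ a" by (rule power_mono[OF ge2]) simp
      also have "\<dots> = real p powr (real a * \<epsilon>)"
      proof -
        have "(real p powr \<epsilon>) powr real a = (real p powr \<epsilon>) ^ a"
          by (rule powr_realpow) (use p2 in simp)
        moreover have "(real p powr \<epsilon>) powr real a = real p powr (real a * \<epsilon>)"
          by (simp add: powr_powr mult.commute)
        ultimately show ?thesis by simp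
      qed
      finally have "real a + 1 \<le> real p powr (real a * \<epsilon>)" .
      hence "(real a + 1) * real (dcount b) \<le> real p powr (real a * \<epsilon>) * (K ^ card (X b) * real b powr \<epsilon>)"
        using IH by (intro mult_mono) auto
      hence "real (dcount n) \<le> real p powr (real a * \<epsilon>) * (K ^ card (X b) * real b powr \<epsilon>)"
        using step by linarith
      also have "\<dots> = K ^ card (X n) * real n powr \<epsilon>"
        using False Xn npow by simp
      finally show ?thesis unfolding K_def X_def P_def by simp
    qed
  qed
qed

lemma divisor_bound:
  assumes e: "\<epsilon> > 0"
  shows "\<exists>C>0. \<forall>n>0. real (card {k. k dvd n}) \<le> C * real n powr \<epsilon>"
proof -
  define K where "K = max 1 (1 / (\<epsilon> * ln 2))"
  define P where "P = nat \<lceil>2 powr (1/\<epsilon>)\<rceil>"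
  have K1: "K \<ge> 1" unfolding K_def by simp
  show ?thesis
  proof (intro exI[of _ "K ^ P"] conjI allI impI)
    show "K ^ P > 0" using K1 by simp
    fix n :: nat assume n: "n > 0"
    have c: "card {q. prime q \<and> q dvd n \<and> q < P} \<le> P"
      by (rule order.trans[OF card_mono[of "{..<P}"]]) auto
    have "real (dcount n) \<le> K ^ card {q. prime q \<and> q dvd n \<and> q < P} * real n powr \<epsilon>"
      using dcount_bound_aux[OF e n] unfolding K_def P_def by simp
    also have "\<dots> \<le> K ^ P * real n powr \<epsilon>"
      by (intro mult_right_mono power_increasing c K1) simp
    finally show "real (card {k. k dvd n}) \<le> K ^ P * real n powr \<epsilon>" by (simp add: dcount_def)
  qed
qed



definition e :: "int \<Rightarrow> real \<Rightarrow> complex" where "e n t = exp (\<i> * of_int n * of_real t)"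
definition G :: "real set \<Rightarrow> int \<Rightarrow> complex" where "G A n = (LINT t:A|lebesgue. e n t)"

lemma e_mult: "e a t * e b t = e (a + b) t"
  unfolding e_def by (simp add: exp_add[symmetric] algebra_simps)

lemma e_cnj: "cnj (e n t) = e (-n) t"
  unfolding e_def by (simp add: exp_cnj)

lemma e_norm [simp]: "norm (e n t) = 1"
proof -
  have "e n t = exp (\<i> * of_real (real_of_int n * t))" unfolding e_def by (simp add: mult.assoc)
  thus ?thesis by simp
qed

lemma e_meas [measurable]: "e n \<in> borel_measurable lebesgue"
proof -
  have "continuous_on UNIV (e n)" unfolding e_def by (intro continuous_intros)
  hence "e n \<in> borel_measurable borel" by (rule borel_measurable_continuous_onI)
  hence "e n \<in> borel_measurable lborel" by simp
  thus ?thesis by (rule measurable_completion)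
qed

lemma e_int:
  assumes A: "A \<in> sets lebesgue" "emeasure lebesgue A < \<infinity>"
  shows "integrable lebesgue (\<lambda>t. indicator A t *\<^sub>R e n t)"
proof (rule Bochner_Integration.integrable_bound[OF integrable_real_indicator[OF A]])
  show "(\<lambda>t. indicator A t *\<^sub>R e n t) \<in> borel_measurable lebesgue" using A(1) by measurable
  show "AE x in lebesgue. norm (indicator A x *\<^sub>R e n x) \<le> norm (indicator A x :: real)"
    by (auto split: split_indicator)
qed

lemma expand:
  assumes A: "A \<in> sets lebesgue" "emeasure lebesgue A < \<infinity>" and I: "finite I"
  shows "complex_of_real (LINT t:A|lebesgue. (cmod (\<Sum>i\<in>I. c i * e (w i) t))\<^sup>2)
         = (\<Sum>i\<in>I. \<Sum>j\<in>I. c i * cnj (c j) * G A (w i - w j))"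
proof -
  have pt: "complex_of_real ((cmod (\<Sum>i\<in>I. c i * e (w i) t))\<^sup>2)
      = (\<Sum>i\<in>I. \<Sum>j\<in>I. c i * cnj (c j) * e (w i - w j) t)" for t
  proof -
    have "complex_of_real ((cmod (\<Sum>i\<in>I. c i * e (w i) t))\<^sup>2)
        = (\<Sum>i\<in>I. c i * e (w i) t) * (\<Sum>j\<in>I. cnj (c j) * e (- w j) t)"
      unfolding complex_norm_square by (simp add: e_cnj)
    also have "\<dots> = (\<Sum>i\<in>I. \<Sum>j\<in>I. c i * cnj (c j) * (e (w i) t * e (- w j) t))"
      by (simp add: sum_product algebra_simps)
    also have "\<dots> = (\<Sum>i\<in>I. \<Sum>j\<in>I. c i * cnj (c j) * e (w i - w j) t)"
      by (simp add: e_mult)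
    finally show ?thesis .
  qed
  have int1: "integrable lebesgue (\<lambda>t. k * (indicator A t *\<^sub>R e n t))" for k n
    using e_int[OF A, of n] by (rule integrable_mult_right)
  have "complex_of_real (LINT t:A|lebesgue. (cmod (\<Sum>i\<in>I. c i * e (w i) t))\<^sup>2)
      = (LINT t:A|lebesgue. complex_of_real ((cmod (\<Sum>i\<in>I. c i * e (w i) t))\<^sup>2))"
    by (rule set_integral_complex_of_real[symmetric])
  also have "\<dots> = (LINT t:A|lebesgue. (\<Sum>i\<in>I. \<Sum>j\<in>I. c i * cnj (c j) * e (w i - w j) t))"
    by (simp only: pt)
  also have "\<dots> = integral\<^sup>L lebesgue (\<lambda>t. \<Sum>i\<in>I. \<Sum>j\<in>I. c i * cnj (c j) * (indicator A t *\<^sub>R e (w i - w j) t))"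
    unfolding set_lebesgue_integral_def
    by (intro Bochner_Integration.integral_cong refl) (simp add: scaleR_sum_right)
  also have "\<dots> = (\<Sum>i\<in>I. integral\<^sup>L lebesgue (\<lambda>t. \<Sum>j\<in>I. c i * cnj (c j) * (indicator A t *\<^sub>R e (w i - w j) t)))"
    apply (rule Bochner_Integration.integral_sum) apply (rule Bochner_Integration.integrable_sum) apply (rule int1) done
  also have "\<dots> = (\<Sum>i\<in>I. \<Sum>j\<in>I. integral\<^sup>L lebesgue (\<lambda>t. c i * cnj (c j) * (indicator A t *\<^sub>R e (w i - w j) t)))"
    by (intro sum.cong refl Bochner_Integration.integral_sum int1)
  also have "\<dots> = (\<Sum>i\<in>I. \<Sum>j\<in>I. c i * cnj (c j) * G A (w i - w j))"
    unfolding G_def set_lebesgue_integral_def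
    by (intro sum.cong refl integral_mult_right_zero)
  finally show ?thesis .
qed

lemma Ico_fin: "{0..<2*pi} \<in> sets lebesgue" "emeasure lebesgue {0..<2*pi::real} < \<infinity>"
  by auto

lemma ortho: "G {0..<2*pi} n = (if n = 0 then 2*pi else 0)"
proof -
  define V :: complex where "V = (if n = 0 then 2*pi else 0)"
  have si: "set_integrable lebesgue {0..<2*pi} (e n)"
    unfolding set_integrable_def by (rule e_int[OF Ico_fin])
  have h1: "(e n has_integral G {0..<2*pi} n) {0..<2*pi}"
    using has_integral_set_lebesgue[OF si] unfolding G_def .
  have h2: "(e n has_integral V) {0..2*pi}"
  proof (cases "n = 0")
    case True
    have "e n = (\<lambda>_. 1)" using True by (auto simp: e_def)
    moreover have "((\<lambda>_. 1::complex) has_integral (Henstock_Kurzweil_Integration.content {0..2*pi} *\<^sub>R 1)) {0..2*pi}"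
      by (rule has_integral_const_real)
    ultimately show ?thesis using True by (simp add: V_def scaleR_conv_of_real)
  next
    case False
    define a where "a = \<i> * complex_of_int n"
    have a0: "a \<noteq> 0" using False by (simp add: a_def)
    have ee: "e n = (\<lambda>t. exp (a * complex_of_real t))" by (auto simp: e_def a_def)
    have "\<And>t. t \<in> {0..2*pi} \<Longrightarrow> ((\<lambda>x. exp (a * x) / a) has_vector_derivative exp (a * t)) (at t within {0..2*pi})"
      using a0
      by (intro derivative_eq_intros has_complex_derivative_imp_has_vector_derivative [unfolded o_def] | simp)+
    then have "((\<lambda>t. exp(a * of_real t)) has_integral exp(a * complex_of_real (2*pi))/a - exp(a * of_real 0)/a)  {0..2*pi}"
      by (meson fundamental_theorem_of_calculus pi_ge_zero mult_nonneg_nonneg zero_le_numeral)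
    moreover have "exp(a * complex_of_real (2*pi)) = 1"
    proof -
      have "a * complex_of_real (2*pi) = (2 * of_int n * pi) * \<i>" by (simp add: a_def algebra_simps)
      thus ?thesis using exp_integer_2pi[of "of_int n"] by (metis Ints_of_int)
    qed
    ultimately show ?thesis using False by (simp add: ee V_def)
  qed
  have h3: "(e n has_integral V) {0..<2*pi}"
  proof -
    have "negligible {x \<in> {0..2*pi} - {0..<2*pi}. e n x \<noteq> 0}"
      by (rule negligible_subset[of "{2*pi}"]) auto
    moreover have "negligible {x \<in> {0..<2*pi} - {0..2*pi}. e n x \<noteq> 0}" by (rule negligible_subset[of "{}"]) auto
    ultimately show ?thesis using h2 has_integral_spike_set_eq by blast
  qed
  show ?thesis using has_integral_unique[OF h1 h3] by (simp add: V_def)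
qed

lemma bset_int:
  fixes g :: "real \<Rightarrow> 'b::{banach, second_countable_topology}"
  assumes A: "A \<in> sets lebesgue" "emeasure lebesgue A < \<infinity>"
    and g: "g \<in> borel_measurable lebesgue" and B: "\<And>t. norm (g t) \<le> B"
  shows "set_integrable lebesgue A g"
  unfolding set_integrable_def
proof (rule Bochner_Integration.integrable_bound)
  show "integrable lebesgue (\<lambda>t. indicator A t * B)"
    using integrable_real_indicator[OF A] by (rule integrable_mult_left)
  show "(\<lambda>t. indicator A t *\<^sub>R g t) \<in> borel_measurable lebesgue" using A(1) g by measurable
  have "B \<ge> 0" using B[of 0] norm_ge_zero order_trans by blast
  thus "AE x in lebesgue. norm (indicator A x *\<^sub>R g x) \<le> norm (indicator A x * B)"
    using B by (auto split: split_indicator)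
qed

lemma poly_norm: "norm (\<Sum>n\<in>F. a n * e n t) \<le> (\<Sum>n\<in>F. cmod (a n))"
  by (rule order.trans[OF norm_sum]) (simp add: norm_mult)

lemma poly_meas [measurable]: "(\<lambda>t. \<Sum>n\<in>F. a n * e n t) \<in> borel_measurable lebesgue"
  by measurable

lemma parseval:
  assumes F: "finite F"
  shows "(LINT t:{0..<2*pi}|lebesgue. (cmod (\<Sum>n\<in>F. a n * e n t))\<^sup>2) = 2 * pi * (\<Sum>n\<in>F. (cmod (a n))\<^sup>2)"
proof -
  have "complex_of_real (LINT t:{0..<2*pi}|lebesgue. (cmod (\<Sum>n\<in>F. a n * e (id n) t))\<^sup>2)
      = (\<Sum>i\<in>F. \<Sum>j\<in>F. a i * cnj (a j) * G {0..<2*pi} (id i - id j))"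
    by (rule expand[OF Ico_fin F])
  also have "\<dots> = (\<Sum>i\<in>F. \<Sum>j\<in>F. if j = i then a i * cnj (a i) * (2 * pi) else 0)"
    by (intro sum.cong refl) (auto simp: ortho)
  also have "\<dots> = (\<Sum>i\<in>F. a i * cnj (a i) * (2 * pi))"
    using F by simp
  also have "\<dots> = (\<Sum>i\<in>F. complex_of_real (2 * pi * (cmod (a i))\<^sup>2))"
    by (intro sum.cong refl, subst complex_norm_square[symmetric]) simp
  finally show ?thesis by (simp only: id_def of_real_sum[symmetric] sum_distrib_left[symmetric] of_real_eq_iff)
qed

lemma set_integral_sum_e:
  assumes A: "A \<in> sets lebesgue" "emeasure lebesgue A < \<infinity>"
  shows "(LINT t:A|lebesgue. (\<Sum>n\<in>F. a n * e n t)) = (\<Sum>n\<in>F. a n * G A n)"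
proof -
  have int1: "integrable lebesgue (\<lambda>t. k * (indicator A t *\<^sub>R e n t))" for k n
    using e_int[OF A, of n] by (rule integrable_mult_right)
  have "(LINT t:A|lebesgue. (\<Sum>n\<in>F. a n * e n t))
      = integral\<^sup>L lebesgue (\<lambda>t. \<Sum>n\<in>F. a n * (indicator A t *\<^sub>R e n t))"
    unfolding set_lebesgue_integral_def
    by (intro Bochner_Integration.integral_cong refl) (simp add: scaleR_sum_right)
  also have "\<dots> = (\<Sum>n\<in>F. integral\<^sup>L lebesgue (\<lambda>t. a n * (indicator A t *\<^sub>R e n t)))"
    by (intro Bochner_Integration.integral_sum int1)
  also have "\<dots> = (\<Sum>n\<in>F. a n * G A n)"
    unfolding G_def set_lebesgue_integral_def by (intro sum.cong refl integral_mult_right_zero)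
  finally show ?thesis .
qed

lemma bessel:
  assumes S: "S \<in> sets lebesgue" "S \<subseteq> {0..<2*pi}" and F: "finite F"
  shows "(\<Sum>n\<in>F. (cmod (G S n))\<^sup>2) \<le> 2 * pi * measure lebesgue S"
proof -
  define Y where "Y = (\<Sum>n\<in>F. (cmod (G S n))\<^sup>2)"
  define P where "P = (\<lambda>t. \<Sum>n\<in>F. cnj (G S n) * e n t)"
  have Sfin: "emeasure lebesgue S < \<infinity>"
    using emeasure_mono[OF S(2) Ico_fin(1)] Ico_fin(2) by (rule le_less_trans)
  define B where "B = (\<Sum>n\<in>F. cmod (cnj (G S n)))"
  have Pb: "norm (P t) \<le> B" for t unfolding P_def B_def by (rule poly_norm)
  have Pm: "P \<in> borel_measurable lebesgue" unfolding P_def by measurable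
  have i1: "set_integrable lebesgue S P" by (rule bset_int[OF S(1) Sfin Pm Pb])
  have i2: "set_integrable lebesgue S (\<lambda>t. cmod (P t))"
    by (rule bset_int[OF S(1) Sfin, of _ B]) (use Pm Pb in auto)
  have i3: "set_integrable lebesgue A (\<lambda>t. (cmod (P t))\<^sup>2)" if "A \<in> sets lebesgue" "emeasure lebesgue A < \<infinity>" for A
  proof (rule bset_int[OF that, of _ "B\<^sup>2"])
    show "(\<lambda>t. (cmod (P t))\<^sup>2) \<in> borel_measurable lebesgue" using Pm by measurable
    show "norm ((cmod (P t))\<^sup>2) \<le> B\<^sup>2" for t using Pb[of t] by (simp add: power_mono)
  qed
  have i4: "set_integrable lebesgue S (\<lambda>t. pi + (cmod (P t))\<^sup>2 / (4 * pi))"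
    using i3[OF S(1) Sfin] integrable_real_indicator[OF S(1) Sfin]
    by (intro set_integral_add set_integrable_divide) (auto simp: set_integrable_def Sfin S)
  have "complex_of_real Y = (\<Sum>n\<in>F. cnj (G S n) * G S n)"
    unfolding Y_def of_real_sum by (intro sum.cong refl, subst complex_norm_square) (simp add: mult.commute)
  also have "\<dots> = (LINT t:S|lebesgue. P t)" unfolding P_def by (rule set_integral_sum_e[OF S(1) Sfin, symmetric])
  finally have Yeq: "complex_of_real Y = (LINT t:S|lebesgue. P t)" .
  have "Y = norm (LINT t:S|lebesgue. P t)"
  proof -
    have "Y \<ge> 0" unfolding Y_def by (intro sum_nonneg) simp
    thus ?thesis using Yeq by (metis norm_of_real abs_of_nonneg)
  qed
  also have "\<dots> \<le> (LINT t:S|lebesgue. cmod (P t))" by (rule set_integral_norm_bound[OF i1])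
  also have "\<dots> \<le> (LINT t:S|lebesgue. pi + (cmod (P t))\<^sup>2 / (4 * pi))"
  proof (rule set_integral_mono[OF i2 i4])
    fix t
    have "0 \<le> (cmod (P t) - 2 * pi)\<^sup>2" by simp
    hence "4 * pi * cmod (P t) \<le> 4 * pi * pi + (cmod (P t))\<^sup>2" by (simp add: power2_eq_square algebra_simps)
    thus "cmod (P t) \<le> pi + (cmod (P t))\<^sup>2 / (4 * pi)" using pi_gt_zero by (simp add: field_simps)
  qed
  also have "\<dots> = pi * measure lebesgue S + (LINT t:S|lebesgue. (cmod (P t))\<^sup>2) / (4 * pi)"
    using i3[OF S(1) Sfin] S(1) Sfin
    by (simp add: set_integral_add(2) set_integral_const set_integrable_def)
  also have "(LINT t:S|lebesgue. (cmod (P t))\<^sup>2) \<le> (LINT t:{0..<2*pi}|lebesgue. (cmod (P t))\<^sup>2)"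
    using i3[OF S(1) Sfin] i3[OF Ico_fin] S(2)
    unfolding set_integrable_def set_lebesgue_integral_def
    by (intro integral_mono) (auto split: split_indicator)
  also have "(LINT t:{0..<2*pi}|lebesgue. (cmod (P t))\<^sup>2) = 2 * pi * Y"
    unfolding P_def Y_def by (simp add: parseval[OF F])
  finally have "Y \<le> pi * measure lebesgue S + 2 * pi * Y / (4 * pi)"
    using divide_right_mono[of _ _ "4*pi"] pi_gt_zero by simp
  hence "Y \<le> 2 * pi * measure lebesgue S" by (simp add: field_simps)
  thus ?thesis unfolding Y_def .
qed



lemma schur:
  fixes g :: "int \<Rightarrow> real" and c :: "int \<Rightarrow> complex"
  assumes B: "finite B" and g0: "\<And>x. g x \<ge> 0" and gs: "\<And>x. g (-x) = g x"
    and H: "\<And>i. i \<in> B \<Longrightarrow> (\<Sum>j\<in>B. if i = j then 0 else g (i - j)) \<le> H"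
  shows "(\<Sum>i\<in>B. \<Sum>j\<in>B. if i = j then 0 else cmod (c i) * cmod (c j) * g (i - j))
         \<le> H * (\<Sum>i\<in>B. (cmod (c i))\<^sup>2)"
proof -
  define a where "a = (\<lambda>i. (cmod (c i))\<^sup>2)"
  have "(\<Sum>i\<in>B. \<Sum>j\<in>B. if i = j then 0 else cmod (c i) * cmod (c j) * g (i - j))
      \<le> (\<Sum>i\<in>B. \<Sum>j\<in>B. (if i = j then 0 else a i * g (i - j)) / 2 + (if i = j then 0 else a j * g (i - j)) / 2)"
  proof (intro sum_mono)
    fix i j
    have "2 * (cmod (c i) * cmod (c j)) \<le> a i + a j"
      unfolding a_def using sum_squares_bound[of "cmod (c i)" "cmod (c j)"] by (simp add: power2_eq_square algebra_simps)
    hence "cmod (c i) * cmod (c j) * g (i - j) \<le> (a i + a j) / 2 * g (i - j)"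
      using g0[of "i - j"] by (intro mult_right_mono) auto
    thus "(if i = j then 0 else cmod (c i) * cmod (c j) * g (i - j))
      \<le> (if i = j then 0 else a i * g (i - j)) / 2 + (if i = j then 0 else a j * g (i - j)) / 2"
      by (auto simp: field_simps)
  qed
  also have "\<dots> = (\<Sum>i\<in>B. \<Sum>j\<in>B. if i = j then 0 else a i * g (i - j)) / 2
                  + (\<Sum>i\<in>B. \<Sum>j\<in>B. if i = j then 0 else a j * g (i - j)) / 2"
    by (simp add: sum.distrib sum_divide_distrib)
  also have "(\<Sum>i\<in>B. \<Sum>j\<in>B. if i = j then 0 else a j * g (i - j))
           = (\<Sum>i\<in>B. \<Sum>j\<in>B. if i = j then 0 else a i * g (i - j))"
    by (subst sum.swap) (intro sum.cong refl, metis gs minus_diff_eq)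
  also have "(\<Sum>i\<in>B. \<Sum>j\<in>B. if i = j then 0 else a i * g (i - j))
           = (\<Sum>i\<in>B. a i * (\<Sum>j\<in>B. if i = j then 0 else g (i - j)))"
    by (simp add: sum_distrib_left if_distrib cong: if_cong)
  also have "\<dots> \<le> (\<Sum>i\<in>B. a i * H)"
    by (intro sum_mono mult_left_mono H) (auto simp: a_def)
  finally show ?thesis by (simp add: a_def sum_distrib_left mult.commute)
qed

lemma G_neg: "G A (-n) = cnj (G A n)"
proof -
  have eq: "\<And>x. indicator A x *\<^sub>R e (-n) x = cnj (indicator A x *\<^sub>R e n x)"
    by (simp add: e_cnj scaleR_conv_of_real)
  show ?thesis unfolding G_def set_lebesgue_integral_def by (simp only: eq Bochner_Integration.integral_cnj)
qed

lemma G_zero: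
  assumes A: "A \<in> sets lebesgue" "emeasure lebesgue A < \<infinity>"
  shows "G A 0 = complex_of_real (measure lebesgue A)"
proof -
  have e0: "e 0 = (\<lambda>_. 1)" by (auto simp: e_def)
  have "G A 0 = (LINT t:A|lebesgue. (1::complex))" unfolding G_def e0 ..
  also have "\<dots> = measure lebesgue A *\<^sub>R 1" using A by (intro set_integral_const) auto
  finally show ?thesis by (simp add: scaleR_conv_of_real)
qed

lemma inner_bound:
  fixes l :: nat and g :: "int \<Rightarrow> real"
  assumes l: "l \<ge> 1" and g0: "\<And>x. g x \<ge> 0"
    and i: "i \<in> (\<lambda>k. int k * int l) ` {1..N}"
  shows "(\<Sum>j\<in>(\<lambda>k. int k * int l) ` {1..N}. if i = j then 0 else g (i - j))
         \<le> (\<Sum>d\<in>{-int N..int N} - {0}. g (d * int l))"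
proof -
  let ?B = "(\<lambda>k. int k * int l) ` {1..N}"
  let ?D = "{-int N..int N} - {0}"
  have "(\<Sum>j\<in>?B. if i = j then 0 else g (i - j)) = (\<Sum>j\<in>?B - {i}. g (i - j))"
    by (simp add: sum.If_cases Diff_eq Int_commute flip: Compl_eq)
  also have "\<dots> = (\<Sum>x\<in>(\<lambda>j. i - j) ` (?B - {i}). g x)"
    by (subst sum.reindex) (auto simp: inj_on_def)
  also have "\<dots> \<le> (\<Sum>x\<in>(\<lambda>d. d * int l) ` ?D. g x)"
  proof (rule sum_mono2)
    show "finite ((\<lambda>d. d * int l) ` ?D)" by simp
    show "(\<lambda>j. i - j) ` (?B - {i}) \<subseteq> (\<lambda>d. d * int l) ` ?D"
    proof
      fix x assume "x \<in> (\<lambda>j. i - j) ` (?B - {i})"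
      then obtain j where j: "j \<in> ?B" "j \<noteq> i" and x: "x = i - j" by auto
      obtain k where k: "k \<in> {1..N}" "i = int k * int l" using i by auto
      obtain k' where k': "k' \<in> {1..N}" "j = int k' * int l" using j by auto
      have "x = (int k - int k') * int l" using x k k' by (simp add: algebra_simps)
      moreover have "int k - int k' \<in> ?D" using k k' j by auto
      ultimately show "x \<in> (\<lambda>d. d * int l) ` ?D" by blast
    qed
    show "\<And>b. b \<in> (\<lambda>d. d * int l) ` ?D - (\<lambda>j. i - j) ` (?B - {i}) \<Longrightarrow> 0 \<le> g b" using g0 by blast
  qed
  also have "\<dots> = (\<Sum>d\<in>?D. g (d * int l))"
    using l by (subst sum.reindex) (auto simp: inj_on_def)
  finally show ?thesis .
qed

lemma riesz:
  fixes l N :: nat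
  assumes S: "S \<in> sets lebesgue" "S \<subseteq> {0..<2*pi}" and \<mu>: "measure lebesgue S > 0" and l: "l \<ge> 1"
    and T: "(\<Sum>d\<in>{-int N..int N} - {0}. cmod (G S (d * int l))) \<le> measure lebesgue S / 2"
  shows "lower_riesz_bound S ((\<lambda>k. int k * int l) ` {1..N}) (measure lebesgue S / (4*pi))"
proof -
  let ?B = "(\<lambda>k. int k * int l) ` {1..N}"
  define \<mu> where "\<mu> = measure lebesgue S"
  have Sfin: "emeasure lebesgue S < \<infinity>"
    using emeasure_mono[OF S(2) Ico_fin(1)] Ico_fin(2) by (rule le_less_trans)
  have B: "finite ?B" by simp
  define g where "g = (\<lambda>x. cmod (G S x))"
  have g0: "g x \<ge> 0" for x by (simp add: g_def)
  have gs: "g (-x) = g x" for x by (simp add: g_def G_neg)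
  have Hb: "(\<Sum>j\<in>?B. if i = j then 0 else g (i - j)) \<le> \<mu> / 2" if "i \<in> ?B" for i
  proof -
    have T': "(\<Sum>d\<in>{-int N..int N} - {0}. g (d * int l)) \<le> \<mu> / 2" using T by (simp add: g_def \<mu>_def)
    show ?thesis using inner_bound[where g=g, OF l g0 that] T' by linarith
  qed
  show ?thesis unfolding lower_riesz_bound_def
  proof (intro conjI allI)
    show "measure lebesgue S / (4*pi) > 0" using \<mu> by simp
    fix c :: "int \<Rightarrow> complex"
    define Q where "Q = (LINT t:S|lebesgue. (cmod (\<Sum>m\<in>?B. c m * e (id m) t))\<^sup>2)"
    define Z where "Z = (\<Sum>i\<in>?B. \<Sum>j\<in>?B. c i * cnj (c j) * G S (id i - id j))"
    have QZ: "complex_of_real Q = Z" unfolding Q_def Z_def by (rule expand[OF S(1) Sfin B])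
    define Off where "Off = (\<Sum>i\<in>?B. \<Sum>j\<in>?B. if i = j then 0 else c i * cnj (c j) * G S (i - j))"
    have "Z = (\<Sum>i\<in>?B. \<Sum>j\<in>?B. (if i = j then c i * cnj (c j) * G S (i - j) else 0)
                 + (if i = j then 0 else c i * cnj (c j) * G S (i - j)))"
      unfolding Z_def by (intro sum.cong refl) auto
    also have "\<dots> = (\<Sum>i\<in>?B. c i * cnj (c i) * G S 0) + Off"
      unfolding Off_def by (simp add: sum.distrib)
    also have "(\<Sum>i\<in>?B. c i * cnj (c i) * G S 0) = complex_of_real (\<mu> * (\<Sum>i\<in>?B. (cmod (c i))\<^sup>2))"
      unfolding G_zero[OF S(1) Sfin] \<mu>_def of_real_mult of_real_sum sum_distrib_left
      by (intro sum.cong refl, subst complex_norm_square[symmetric]) (simp add: mult.commute)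
    finally have Zeq: "Z = complex_of_real (\<mu> * (\<Sum>i\<in>?B. (cmod (c i))\<^sup>2)) + Off" .
    have "cmod Off \<le> (\<Sum>i\<in>?B. \<Sum>j\<in>?B. cmod (if i = j then 0 else c i * cnj (c j) * G S (i - j)))"
      unfolding Off_def by (rule order.trans[OF norm_sum sum_mono[OF norm_sum]])
    also have "\<dots> = (\<Sum>i\<in>?B. \<Sum>j\<in>?B. if i = j then 0 else cmod (c i) * cmod (c j) * g (i - j))"
      by (intro sum.cong refl) (simp add: g_def norm_mult)
    also have "\<dots> \<le> \<mu> / 2 * (\<Sum>i\<in>?B. (cmod (c i))\<^sup>2)"
      by (rule schur[OF B g0 gs Hb])
    finally have Offb: "cmod Off \<le> \<mu> / 2 * (\<Sum>i\<in>?B. (cmod (c i))\<^sup>2)" .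
    have "Q = Re Z" using QZ by (metis Re_complex_of_real)
    also have "\<dots> = \<mu> * (\<Sum>i\<in>?B. (cmod (c i))\<^sup>2) + Re Off" by (simp add: Zeq)
    finally have "Q \<ge> \<mu> / 2 * (\<Sum>i\<in>?B. (cmod (c i))\<^sup>2)"
      using Offb abs_Re_le_cmod[of Off] by linarith
    hence "Q / (2 * pi) \<ge> \<mu> / (4 * pi) * (\<Sum>i\<in>?B. (cmod (c i))\<^sup>2)"
      by (simp add: field_simps)
    moreover have "(LINT t:S|lebesgue. (cmod (\<Sum>m\<in>?B. c m * exp (\<i> * of_int m * of_real t)))\<^sup>2 / (2 * pi)) = Q / (2 * pi)"
      unfolding Q_def by (simp add: e_def)
    ultimately show "(LINT t:S|lebesgue. (cmod (\<Sum>m\<in>?B. c m * exp (\<i> * of_int m * of_real t)))\<^sup>2 / (2 * pi))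
        \<ge> measure lebesgue S / (4*pi) * (\<Sum>m\<in>?B. (cmod (c m))\<^sup>2)"
      unfolding \<mu>_def by simp
  qed
qed



lemma amgm_sum:
  fixes x :: "int \<Rightarrow> real"
  assumes lam: "lam > 0"
  shows "(\<Sum>d\<in>D. x d) \<le> real (card D) * lam / 2 + (\<Sum>d\<in>D. (x d)\<^sup>2) / (2 * lam)"
proof -
  have "x d \<le> lam / 2 + (x d)\<^sup>2 / (2 * lam)" for d
  proof -
    have "0 \<le> (x d - lam)\<^sup>2" by simp
    hence "2 * lam * x d \<le> lam * lam + (x d)\<^sup>2" by (simp add: power2_eq_square algebra_simps)
    thus ?thesis using lam by (simp add: field_simps)
  qed
  hence "(\<Sum>d\<in>D. x d) \<le> (\<Sum>d\<in>D. lam / 2 + (x d)\<^sup>2 / (2 * lam))" by (rule sum_mono)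
  also have "\<dots> = real (card D) * lam / 2 + (\<Sum>d\<in>D. (x d)\<^sup>2) / (2 * lam)"
    by (simp add: sum.distrib sum_divide_distrib)
  finally show ?thesis .
qed

lemma avg_sum:
  fixes M N :: nat and R :: real
  assumes S: "S \<in> sets lebesgue" "S \<subseteq> {0..<2*pi}" and R0: "R \<ge> 0"
    and mult: "\<And>n::nat. n > 0 \<Longrightarrow> n \<le> N * M \<Longrightarrow> real (card {k. k dvd n}) \<le> R"
  shows "(\<Sum>l\<in>{1..M}. \<Sum>d\<in>{-int N..int N} - {0}. (cmod (G S (d * int l)))\<^sup>2)
         \<le> R * (2 * pi * measure lebesgue S)"
proof -
  define D where "D = {-int N..int N} - {0}"
  define X where "X = {1..M} \<times> D"
  define f where "f = (\<lambda>(l::nat, d::int). d * int l)"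
  define h where "h = (\<lambda>n. (cmod (G S n))\<^sup>2)"
  have finX: "finite X" unfolding X_def D_def by simp
  have "(\<Sum>l\<in>{1..M}. \<Sum>d\<in>D. h (d * int l)) = (\<Sum>x\<in>X. h (f x))"
    unfolding X_def f_def by (simp add: sum.cartesian_product split_def)
  also have "\<dots> = (\<Sum>n\<in>f ` X. \<Sum>x | x \<in> X \<and> f x = n. h (f x))"
    by (rule sum.image_gen[OF finX])
  also have "\<dots> = (\<Sum>n\<in>f ` X. real (card {x \<in> X. f x = n}) * h n)"
    by (intro sum.cong refl) simp
  also have "\<dots> \<le> (\<Sum>n\<in>f ` X. R * h n)"
  proof (intro sum_mono mult_right_mono)
    fix n assume n: "n \<in> f ` X"
    show "0 \<le> h n" by (simp add: h_def)
    obtain l d where ld: "l \<in> {1..M}" "d \<in> D" "n = d * int l" using n unfolding X_def f_def by auto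
    have n0: "nat \<bar>n\<bar> > 0" using ld unfolding D_def by auto
    have "\<bar>n\<bar> = \<bar>d\<bar> * int l" using ld by (simp add: abs_mult)
    also have "\<dots> \<le> int N * int M" using ld unfolding D_def by (intro mult_mono) auto
    finally have nle: "nat \<bar>n\<bar> \<le> N * M" by (simp add: nat_le_iff)
    have "card {x \<in> X. f x = n} \<le> card {k. k dvd nat \<bar>n\<bar>}"
    proof (rule card_inj_on_le[of fst])
      show "inj_on fst {x \<in> X. f x = n}"
      proof (rule inj_onI)
        fix x y assume "x \<in> {x \<in> X. f x = n}" "y \<in> {x \<in> X. f x = n}" "fst x = fst y"
        thus "x = y" unfolding X_def f_def by (cases x, cases y) auto
      qed
      show "fst ` {x \<in> X. f x = n} \<subseteq> {k. k dvd nat \<bar>n\<bar>}"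
      proof
        fix k assume "k \<in> fst ` {x \<in> X. f x = n}"
        then obtain d' where "(k, d') \<in> X" "d' * int k = n" unfolding f_def by auto
        hence "int k dvd \<bar>n\<bar>" by auto
        thus "k \<in> {k. k dvd nat \<bar>n\<bar>}" by (metis abs_ge_zero int_dvd_int_iff int_nat_eq mem_Collect_eq)
      qed
      show "finite {k. k dvd nat \<bar>n\<bar>}" using n0 finite_divisors_nat[of "nat \<bar>n\<bar>"] by (simp del: dvd_nat_abs_iff)
    qed
    hence "real (card {x \<in> X. f x = n}) \<le> real (card {k. k dvd nat \<bar>n\<bar>})" by simp
    also have "\<dots> \<le> R" by (rule mult[OF n0 nle])
    finally show "real (card {x \<in> X. f x = n}) \<le> R" .
  qed
  also have "\<dots> = R * (\<Sum>n\<in>f ` X. h n)" by (simp add: sum_distrib_left)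
  also have "\<dots> \<le> R * (2 * pi * measure lebesgue S)"
  proof (rule mult_left_mono)
    show "(\<Sum>n\<in>f ` X. h n) \<le> 2 * pi * measure lebesgue S"
      unfolding h_def by (rule bessel[OF S]) (simp add: finX)
    show "0 \<le> R" by (rule R0)
  qed
  finally show ?thesis unfolding D_def h_def .
qed



lemma pigeon:
  fixes f :: "nat \<Rightarrow> real"
  assumes "finite L" "L \<noteq> {}"
  shows "\<exists>l\<in>L. f l \<le> (\<Sum>l\<in>L. f l) / real (card L)"
proof (rule ccontr)
  assume "\<not> ?thesis"
  hence "\<And>l. l \<in> L \<Longrightarrow> (\<Sum>l\<in>L. f l) / real (card L) < f l" by auto
  hence "(\<Sum>l\<in>L. (\<Sum>l\<in>L. f l) / real (card L)) < (\<Sum>l\<in>L. f l)"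
    by (rule sum_strict_mono[OF assms])
  thus False using assms by simp
qed

theorem lemma11:
  fixes S :: "real set"
  assumes "S \<subseteq> {0..<2*pi}" and "S \<in> sets lebesgue" and "emeasure lebesgue S > 0"
  shows "\<exists>\<gamma>>0. \<forall>\<alpha>::real. \<alpha> > 1 \<longrightarrow>
           (\<exists>N\<^sub>0::nat. \<forall>N::nat. N \<ge> N\<^sub>0 \<longrightarrow>
              (\<exists>l::nat. l \<ge> 1 \<and> real l < real N powr \<alpha> \<and>
                 lower_riesz_bound S ((\<lambda>k. int k * int l) ` {1..N}) \<gamma>))"
proof -
  define \<mu> where "\<mu> = measure lebesgue S"
  have S: "S \<in> sets lebesgue" "S \<subseteq> {0..<2*pi}" using assms by auto
  have Sfin: "emeasure lebesgue S < \<infinity>"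
    using emeasure_mono[OF S(2) Ico_fin(1)] Ico_fin(2) by (rule le_less_trans)
  have \<mu>pos: "\<mu> > 0"
    using assms(3) Sfin unfolding \<mu>_def by (simp add: emeasure_eq_ennreal_measure)
  show ?thesis
  proof (intro exI[of _ "\<mu> / (4*pi)"] conjI allI impI)
    show "\<mu> / (4*pi) > 0" using \<mu>pos by simp
    fix \<alpha> :: real assume \<alpha>: "\<alpha> > 1"
    define \<epsilon> where "\<epsilon> = (\<alpha> - 1) / (2 * (\<alpha> + 1))"
    have \<epsilon>0: "\<epsilon> > 0" unfolding \<epsilon>_def using \<alpha> by simp
    obtain C where C0: "C > 0" and C: "\<And>n. n > 0 \<Longrightarrow> real (card {k. k dvd n}) \<le> C * real n powr \<epsilon>"
      using divisor_bound[OF \<epsilon>0] by blast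
    define K where "K = 16 * pi * C / \<mu>"
    have K0: "K \<ge> 0" unfolding K_def using C0 \<mu>pos by simp
    define N0 where "N0 = max 2 (nat \<lceil>(K + 1) powr (2 / (\<alpha> - 1))\<rceil>)"
    show "\<exists>N0. \<forall>N\<ge>N0. \<exists>l\<ge>1. real l < real N powr \<alpha> \<and>
            lower_riesz_bound S ((\<lambda>k. int k * int l) ` {1..N}) (\<mu> / (4 * pi))"
    proof (rule exI[of _ N0], intro allI impI)
      fix N :: nat assume N: "N \<ge> N0"
      have N2: "N \<ge> 2" using N unfolding N0_def by simp
      have NK: "real N \<ge> (K + 1) powr (2 / (\<alpha> - 1))" using N unfolding N0_def by linarith
      define M where "M = nat (\<lceil>real N powr \<alpha>\<rceil> - 1)"
      have Nal2: "real N powr \<alpha> \<ge> 2"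
      proof -
        have "real N powr 1 \<le> real N powr \<alpha>" using N2 \<alpha> by (intro powr_mono) auto
        thus ?thesis using N2 by simp
      qed
      have Mlt: "real M < real N powr \<alpha>" unfolding M_def using Nal2 by linarith
      have Mge: "real M \<ge> real N powr \<alpha> - 1" unfolding M_def using Nal2 by linarith
      have M1: "M \<ge> 1" using Mge Nal2 by linarith
      define R where "R = C * (real N * real M) powr \<epsilon>"
      have R0: "R \<ge> 0" unfolding R_def using C0 by simp
      have mult: "real (card {k. k dvd n}) \<le> R" if "n > 0" "n \<le> N * M" for n :: nat
      proof -
        have "real n powr \<epsilon> \<le> (real N * real M) powr \<epsilon>"
          using that \<epsilon>0 by (intro powr_mono2) (auto simp flip: of_nat_mult)
        thus ?thesis using C[OF that(1)] C0 unfolding R_def by (smt (verit) mult_left_mono)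
      qed
      have avg: "(\<Sum>l\<in>{1..M}. \<Sum>d\<in>{-int N..int N} - {0}. (cmod (G S (d * int l)))\<^sup>2)
         \<le> R * (2 * pi * \<mu>)"
        unfolding \<mu>_def by (rule avg_sum[OF S R0 mult])
      obtain l where l: "l \<in> {1..M}"
        and lb: "(\<Sum>d\<in>{-int N..int N} - {0}. (cmod (G S (d * int l)))\<^sup>2)
              \<le> (\<Sum>l\<in>{1..M}. \<Sum>d\<in>{-int N..int N} - {0}. (cmod (G S (d * int l)))\<^sup>2) / real (card {1..M})"
        using pigeon[of "{1..M}" "\<lambda>l. \<Sum>d\<in>{-int N..int N} - {0}. (cmod (G S (d * int l)))\<^sup>2"] M1 by auto
      have key: "16 * pi * real N * R \<le> \<mu> * real M"
      proof -
        define A where "A = real N powr ((\<alpha> - 1) / 2)"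
        define B where "B = real N powr ((\<alpha> + 1) / 2)"
        have AB: "real N powr \<alpha> = A * B" unfolding A_def B_def
        proof -
          have "\<alpha> = (\<alpha> - 1) / 2 + (\<alpha> + 1) / 2" by (simp add: field_simps)
          thus "real N powr \<alpha> = real N powr ((\<alpha> - 1) / 2) * real N powr ((\<alpha> + 1) / 2)"
            by (metis powr_add)
        qed
        have B1: "B \<ge> 1" unfolding B_def using N2 \<alpha> by (intro ge_one_powr_ge_zero) auto
        have "A \<ge> ((K + 1) powr (2 / (\<alpha> - 1))) powr ((\<alpha> - 1) / 2)"
          unfolding A_def using NK \<alpha> by (intro powr_mono2) auto
        also have "((K + 1) powr (2 / (\<alpha> - 1))) powr ((\<alpha> - 1) / 2) = K + 1"
        proof -
          have "2 / (\<alpha> - 1) * ((\<alpha> - 1) / 2) = 1" using \<alpha> by (simp add: field_simps)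
          hence "((K + 1) powr (2 / (\<alpha> - 1))) powr ((\<alpha> - 1) / 2) = (K + 1) powr 1"
            by (simp only: powr_powr)
          thus ?thesis using K0 by simp
        qed
        finally have AK: "A \<ge> K + 1" .
        have "real N * real M \<le> real N * real N powr \<alpha>" using Mlt by (intro mult_left_mono) auto
        also have "\<dots> = real N powr (1 + \<alpha>)" using N2 by (simp add: powr_add)
        finally have "(real N * real M) powr \<epsilon> \<le> (real N powr (1 + \<alpha>)) powr \<epsilon>"
          using \<epsilon>0 by (intro powr_mono2) auto
        also have "\<dots> = real N powr ((\<alpha> - 1) / 2)"
        proof -
          have "(1 + \<alpha>) * \<epsilon> = (\<alpha> - 1) / 2" unfolding \<epsilon>_def using \<alpha> by (simp add: field_simps)
          thus ?thesis by (simp only: powr_powr)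
        qed
        finally have NMe: "(real N * real M) powr \<epsilon> \<le> real N powr ((\<alpha> - 1) / 2)" .
        have "real N * real N powr ((\<alpha> - 1) / 2) = B"
          unfolding B_def using N2 by (simp add: powr_add[symmetric] powr_mult_base field_simps)
        hence NR: "real N * R \<le> C * B" unfolding R_def using NMe C0 N2
          by (smt (verit) mult_left_mono mult.commute mult.left_commute of_nat_0_le_iff)
        have "K * B \<le> real M"
        proof -
          have "(K + 1) * B \<le> A * B" using AK B1 by (intro mult_right_mono) auto
          thus ?thesis using Mge AB B1 by (simp add: algebra_simps)
        qed
        hence "16 * pi * C / \<mu> * B \<le> real M" unfolding K_def .
        hence "16 * pi * C * B \<le> \<mu> * real M" using \<mu>pos by (simp add: field_simps)
        moreover have "(16 * pi) * (real N * R) \<le> (16 * pi) * (C * B)"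
          by (rule mult_left_mono[OF NR]) simp
        ultimately show ?thesis unfolding mult.assoc by linarith
      qed
      define V where "V = (\<Sum>d\<in>{-int N..int N} - {0}. (cmod (G S (d * int l)))\<^sup>2)"
      have V: "V \<le> \<mu>\<^sup>2 / (8 * real N)"
      proof -
        have "V \<le> R * (2 * pi * \<mu>) / real M"
          using lb avg M1 unfolding V_def by (smt (verit) card_atLeastAtMost diff_Suc_1 divide_right_mono of_nat_0_le_iff)
        also have "\<dots> \<le> \<mu>\<^sup>2 / (8 * real N)"
          using key \<mu>pos M1 N2 by (simp add: field_simps power2_eq_square)
        finally show ?thesis .
      qed
      have cardD: "card ({-int N..int N} - {0}) = 2 * N" by simp
      have T: "(\<Sum>d\<in>{-int N..int N} - {0}. cmod (G S (d * int l))) \<le> \<mu> / 2"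
      proof -
        have lam: "\<mu> / (4 * real N) > 0" using \<mu>pos N2 by simp
        have "(\<Sum>d\<in>{-int N..int N} - {0}. cmod (G S (d * int l)))
            \<le> real (2 * N) * (\<mu> / (4 * real N)) / 2 + V / (2 * (\<mu> / (4 * real N)))"
          using amgm_sum[OF lam, of "\<lambda>d. cmod (G S (d * int l))" "{-int N..int N} - {0}"]
          unfolding V_def cardD by simp
        also have "\<dots> = \<mu> / 4 + 2 * real N * V / \<mu>" using N2 \<mu>pos by (simp add: field_simps)
        also have "2 * real N * V / \<mu> \<le> \<mu> / 4"
          using V N2 \<mu>pos by (simp add: field_simps power2_eq_square)
        finally show ?thesis by simp
      qed
      have l1: "l \<ge> 1" using l by simp
      show "\<exists>l\<ge>1. real l < real N powr \<alpha> \<and> lower_riesz_bound S ((\<lambda>k. int k * int l) ` {1..N}) (\<mu> / (4 * pi))"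
      proof (intro exI[of _ l] conjI)
        show "l \<ge> 1" by (rule l1)
        show "real l < real N powr \<alpha>" using l Mlt by simp
        show "lower_riesz_bound S ((\<lambda>k. int k * int l) ` {1..N}) (\<mu> / (4 * pi))"
          unfolding \<mu>_def by (rule riesz[OF S _ l1 T[unfolded \<mu>_def]]) (use \<mu>pos in \<open>simp add: \<mu>_def\<close>)
      qed
    qed
  qed
qed

end
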